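(* Let $r$ be a positive integer. Then $$\sum_{k = 1}^\infty \frac{( - 1)^{(r-1)k}\left(\frac{27}{5}\right)^k}{k \binom{3k}kF_{3r}^{2k}} = 2\sqrt {15}\, \frac{F_r }{L_{3r} }\arctan \bigg( \frac{\sqrt 3 }{\alpha ^r (\alpha ^r + L_r )} \bigg) - ( - 1)^{r} \frac{L_r }{L_{3r} }\log \bigg( \frac{F_{3r} }{5F_r^3 } \bigg),$$ $$\sum_{k = 1}^\infty \frac{( - 1)^{rk} 27^k }{k\binom{3k}kL_{3r}^{2k} } = \frac{2\sqrt {15}}{5}\, \frac{L_r }{F_{3r}}\arctan \bigg( \frac{\sqrt 3 }{\alpha ^r (\alpha ^r + \sqrt 5F_r )} \bigg)+ ( - 1)^r \frac{F_r }{F_{3r} }\log \bigg( \frac{L_{3r} }{L_r^3 } \bigg).$$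
   Context: $F_n$ and $L_n$ are the Fibonacci and Lucas numbers: $F_0=0$, $F_1=1$, $L_0=2$, $L_1=1$, and $X_n=X_{n-1}+X_{n-2}$ for both sequences. $\alpha=(1+\sqrt5)/2$ is the golden ratio. *)

theory Defs
  imports Complex_Main "HOL-Number_Theory.Fib"
begin

fun lucas :: "nat \<Rightarrow> nat" where
  "lucas 0 = 2"
| "lucas (Suc 0) = 1"
| "lucas (Suc (Suc n)) = lucas (Suc n) + lucas n"

definition golden :: real where
  "golden = (1 + sqrt 5) / 2"

end

theory Submission
  imports Defs "HOL-Analysis.Analysis"
begin

lemma beta_nat:
  "((\<lambda>t::real. t^m * (1-t)^n) has_integral (fact m * fact n / fact (m+n+1))) {0..1}"
proof -
  have "((\<lambda>t. t powr (real m + 1 - 1) * (1-t) powr (real n + 1 - 1)) has_integral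
          Beta (real m + 1) (real n + 1)) {0..1}"
    by (rule has_integral_Beta_real) auto
  moreover have "Beta (real m + 1) (real n + 1) = fact m * fact n / fact (m+n+1)"
  proof -
    have "Gamma (real m + 1) = fact m" using Gamma_fact[of m] by (simp add: add.commute)
    moreover have "Gamma (real n + 1) = fact n" using Gamma_fact[of n] by (simp add: add.commute)
    moreover have "Gamma (real m + 1 + (real n + 1)) = fact (m+n+1)"
      using Gamma_fact[of "m+n+1"] by (simp add: algebra_simps)
    ultimately show ?thesis by (simp add: Beta_def)
  qed
  ultimately have "((\<lambda>t. t powr (real m) * (1-t) powr (real n)) has_integral
          (fact m * fact n / fact (m+n+1))) {0..1}" by simp
  then show ?thesis
    by (rule has_integral_spike_finite[where S="{0,1}", rotated 2]) (auto simp: powr_realpow)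
qed

lemma deriv_test:
  fixes a w t :: real
  assumes ta: "t \<noteq> a" and Qp: "t^2 + (a-2)*t + (1-a)^2 > 0" and Dn: "2*(a-1)^2 + t*(a-2) \<noteq> 0"
   and wn: "w \<noteq> 0" and a3: "3*a \<noteq> 1" and a1: "a \<noteq> 1"
   and w2: "w^2 = a*(3*a-4)"
  shows "((\<lambda>t. (a * ln((t-a)^2) + (2*a-1) * ln(t^2 + (a-2)*t + (1-a)^2)
            + 2*a/w * arctan(t*w/(2*(a-1)^2 + t*(a-2))))/(3*a-1)) has_real_derivative
     (2*t*(t-1)/((t-a)*(t^2 + (a-2)*t + (1-a)^2)))) (at t)"
proof -
  define D where "D = 2*(a-1)^2 + t*(a-2)"
  define Q where "Q = t^2 + (a-2)*t + (1-a)^2"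
  have e0: "D^2 + (t*w)^2 = 4*(a-1)^2*Q"
    unfolding D_def Q_def power_mult_distrib w2 by algebra
  have e1: "1 + (t*w/D)^2 = 4*(a-1)^2*Q/D^2"
    using Dn e0 unfolding D_def[symmetric] by (simp add: field_simps)
  have Qn: "Q \<noteq> 0" using Qp Q_def by simp
  have tan: "t - a \<noteq> 0" using ta by simp
  have d1: "((\<lambda>t. ln((t-a)^2)) has_real_derivative 2/(t-a)) (at t)"
  proof -
    have pos: "(t-a)^2 > 0" using tan by simp
    have "((\<lambda>t. ln((t-a)^2)) has_real_derivative (2*(t-a))/((t-a)^2)) (at t)"
      using pos by (auto intro!: derivative_eq_intros)
    moreover have "(2*(t-a))/((t-a)^2) = 2/(t-a)"
    proof -
      have "\<And>z::real. z \<noteq> 0 \<Longrightarrow> 2*z/z^2 = 2/z" by (simp add: power2_eq_square)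
      then show ?thesis using tan by blast
    qed
    ultimately show ?thesis by simp
  qed
  have d2: "((\<lambda>t. ln(t^2 + (a-2)*t + (1-a)^2)) has_real_derivative (2*t+a-2)/Q) (at t)"
    using Qp unfolding Q_def[symmetric]
    apply (intro derivative_eq_intros)
    apply (auto simp: Q_def)
    done
  have d3: "((\<lambda>t. arctan(t*w/(2*(a-1)^2 + t*(a-2)))) has_real_derivative w/(2*Q)) (at t)"
    unfolding D_def[symmetric]
    apply (intro derivative_eq_intros)
    using Dn unfolding D_def[symmetric]
    apply (simp_all add: e1)
    apply (simp add: field_simps Qn a1 Dn)
    unfolding D_def
    apply algebra
    done
  have fin: "(a*(2/(t-a)) + (2*a-1)*((2*t+a-2)/Q) + 2*a/w*(w/(2*Q)))/(3*a-1)
     = 2*t*(t-1)/((t-a)*Q)"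
  proof -
    have a3': "3*a-1 \<noteq> 0" using a3 by simp
    have h1: "2*a/w*(w/(2*Q)) = a/Q" using wn by simp
    have h2: "a*(2/(t-a)) + (2*a-1)*((2*t+a-2)/Q) + a/Q
        = (2*a*Q + ((2*a-1)*(2*t+a-2)+a)*(t-a))/((t-a)*Q)"
      using tan Qn by (simp add: field_simps)
    have h3: "2*a*Q + ((2*a-1)*(2*t+a-2)+a)*(t-a) = 2*t*(t-1)*(3*a-1)"
      unfolding Q_def by algebra
    show ?thesis unfolding h1 h2 h3 using a3' by simp
  qed
  have "((\<lambda>t. (a * ln((t-a)^2) + (2*a-1) * ln(t^2 + (a-2)*t + (1-a)^2)
            + 2*a/w * arctan(t*w/(2*(a-1)^2 + t*(a-2))))/(3*a-1)) has_real_derivative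
     (a*(2/(t-a)) + (2*a-1)*((2*t+a-2)/Q) + 2*a/w*(w/(2*Q)))/(3*a-1)) (at t)"
    by (intro DERIV_cdivide DERIV_add DERIV_cmult d1 d2 d3)
  then show ?thesis unfolding fin unfolding Q_def .
qed

lemma term_int:
  "((\<lambda>t::real. 2 * x^(k+1) * (t^(k+1) * (1-t)^(2*k+1))) has_integral
      (x^(k+1) / (real (k+1) * real ((3*(k+1)) choose (k+1))))) {0..1}"
proof -
  have "((\<lambda>t::real. (2 * x^(k+1)) * (t^(k+1) * (1-t)^(2*k+1))) has_integral
      ((2 * x^(k+1)) * (fact (k+1) * fact (2*k+1) / fact ((k+1)+(2*k+1)+1)))) {0..1}"
    by (rule has_integral_mult_right[OF beta_nat])
  moreover have "(2 * x^(k+1)) * (fact (k+1) * fact (2*k+1) / fact ((k+1)+(2*k+1)+1))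
      = x^(k+1) / (real (k+1) * real ((3*(k+1)) choose (k+1)))"
  proof -
    have c: "real ((3*(k+1)) choose (k+1)) = fact (3*k+3) / (fact (k+1) * fact (2*k+2))"
    proof -
      have e1: "3*(k+1)-(k+1) = 2*k+2" "3*(k+1) = 3*k+3" by simp_all
      show ?thesis using binomial_fact[of "k+1" "3*(k+1)", where 'a=real] unfolding e1 by simp
    qed
    have f2: "(fact (2*k+2) :: real) = (2*real k+2) * fact (2*k+1)"
      using fact_Suc[of "2*k+1", where 'a=real] by (simp add: algebra_simps)
    have e: "(k+1)+(2*k+1)+1 = 3*k+3" by simp
    have gen: "\<And>A B C K::real. A\<noteq>0 \<Longrightarrow> B\<noteq>0 \<Longrightarrow> C\<noteq>0 \<Longrightarrow> K \<noteq> 0 \<Longrightarrow>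
       2*x^(k+1)*(A*B/C) = x^(k+1)/(K*(C/(A*((2*K)*B))))"
      by (simp add: field_simps)
    have K: "2*real k+2 = 2*real (k+1)" by simp
    show ?thesis unfolding c e f2 K by (rule gen) auto
  qed
  ultimately show ?thesis by simp
qed

lemma gen_series:
  fixes a w x :: real
  assumes ha: "a*(2*a-3) > 0" and hw: "w > 0" and w2: "w^2 = a*(3*a-4)"
    and hx: "x = 1/(a*(1-a)^2)" and hc: "4*\<bar>x\<bar> < 27"
  shows "(\<lambda>k. x^(k+1) / (real (k+1) * real ((3*(k+1)) choose (k+1)))) sums
          ((ln((a-1)/a) + 2*a/w*arctan(w/(a*(2*a-3))))/(3*a-1))"
proof -
  have aa: "a < 0 \<or> a > 3/2"
  proof (rule ccontr)
    assume "\<not> (a < 0 \<or> a > 3/2)"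
    then have "a \<ge> 0" "2*a-3 \<le> 0" by auto
    then have "a*(2*a-3) \<le> 0" by (rule mult_nonneg_nonpos)
    with ha show False by simp
  qed
  have a0: "a \<noteq> 0" and a1: "a \<noteq> 1" and a3: "3*a \<noteq> 1" using aa by auto
  define \<Phi> where "\<Phi> t = (a * ln((t-a)^2) + (2*a-1) * ln(t^2 + (a-2)*t + (1-a)^2)
            + 2*a/w * arctan(t*w/(2*(a-1)^2 + t*(a-2))))/(3*a-1)" for t :: real
  define h where "h t = 2*t*(t-1)/((t-a)*(t^2 + (a-2)*t + (1-a)^2))" for t :: real
  have Qp: "t^2 + (a-2)*t + (1-a)^2 > 0" for t :: real
  proof -
    have eq: "4*(t^2 + (a-2)*t + (1-a)^2) = (2*t+a-2)^2 + w^2" unfolding w2 by algebra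
    have "(2*t+a-2)^2 + w^2 > 0" using hw by (intro add_nonneg_pos) auto
    then have "4*(t^2 + (a-2)*t + (1-a)^2) > 0" unfolding eq .
    then show ?thesis by simp
  qed
  have Dp: "2*(a-1)^2 + t*(a-2) > 0" if "t \<in> {0..1}" for t
  proof -
    have e: "2*(a-1)^2 + t*(a-2) = (1-t)*(2*(a-1)^2) + t*(a*(2*a-3))" by algebra
    have p1: "(1-t)*(2*(a-1)^2) \<ge> 0" using that by auto
    have p2: "t*(a*(2*a-3)) \<ge> 0" using that ha by auto
    show ?thesis
    proof (cases "t = 1")
      case True
      have "2*(a-1)^2 + 1*(a-2) = a*(2*a-3)" by algebra
      then show ?thesis using ha True by simp
    next
      case False
      then have "1 - t > 0" using that by auto
      moreover have "2*(a-1)^2 > 0" using a1 by simp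
      ultimately have "(1-t)*(2*(a-1)^2) > 0" by simp
      then show ?thesis unfolding e using p2 by linarith
    qed
  qed
  have ta: "t \<noteq> a" if "t \<in> {0..1}" for t using that aa by auto
  have deriv: "(\<Phi> has_real_derivative h t) (at t)" if "t \<in> {0..1}" for t
  proof -
    have "(\<Phi> has_real_derivative h t) (at t) = ((\<lambda>t. (a * ln((t-a)^2) + (2*a-1) * ln(t^2 + (a-2)*t + (1-a)^2)
            + 2*a/w * arctan(t*w/(2*(a-1)^2 + t*(a-2))))/(3*a-1)) has_real_derivative
     (2*t*(t-1)/((t-a)*(t^2 + (a-2)*t + (1-a)^2)))) (at t)"
      unfolding \<Phi>_def[abs_def] h_def by simp
    also have "\<dots>"
      by (rule deriv_test) (use ta[OF that] Qp[of t] Dp[OF that] hw a3 a1 w2 in auto)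
    finally show ?thesis .
  qed
  have ftc: "(h has_integral (\<Phi> 1 - \<Phi> 0)) {0..1}"
    by (rule fundamental_theorem_of_calculus)
       (auto simp: has_real_derivative_iff_has_vector_derivative[symmetric]
             intro!: has_field_derivative_at_within deriv)
  define f where "f k t = 2 * x^(k+1) * (t^(k+1) * (1-t)^(2*k+1))" for k :: nat and t :: real
  define q where "q = 4*\<bar>x\<bar>/27"
  have q1: "q < 1" "q \<ge> 0" using hc by (auto simp: q_def)
  have p427: "t*(1-t)^2 \<le> 4/27" "t*(1-t)^2 \<ge> 0" if "t \<in> {0..1}" for t :: real
  proof -
    have "4 - 27*(t*(1-t)^2) = (3*t-1)^2*(4-3*t)" by algebra
    moreover have "(3*t-1)^2*(4-3*t) \<ge> 0" using that by auto
    ultimately show "t*(1-t)^2 \<le> 4/27" by linarith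
    show "t*(1-t)^2 \<ge> 0" using that by auto
  qed
  have fform: "f k t = (2*x*t*(1-t)) * (x*(t*(1-t)^2))^k" for k t
  proof -
    have "(x*(t*(1-t)^2))^k = x^k * t^k * (1-t)^(2*k)"
      by (simp add: power_mult_distrib power_mult)
    then show ?thesis unfolding f_def by (simp add: power_add)
  qed
  have xp: "\<bar>x*(t*(1-t)^2)\<bar> \<le> q" if "t \<in> {0..1}" for t
  proof -
    have "\<bar>x*(t*(1-t)^2)\<bar> = \<bar>x\<bar> * (t*(1-t)^2)" using p427(2)[OF that] that by (simp add: abs_mult)
    also have "\<dots> \<le> \<bar>x\<bar> * (4/27)" by (rule mult_left_mono[OF p427(1)[OF that]]) simp
    finally show ?thesis by (simp add: q_def)
  qed
  have bound: "norm (f k t) \<le> 2*\<bar>x\<bar> * q^k" if "t \<in> {0..1}" for k t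
  proof -
    have tt: "t*(1-t) \<le> 1" "t*(1-t) \<ge> 0" using that
      by (auto intro!: mult_le_one mult_nonneg_nonneg)
    have "norm (f k t) = (2*\<bar>x\<bar>*(t*(1-t))) * \<bar>x*(t*(1-t)^2)\<bar>^k"
      unfolding fform using tt that by (simp add: abs_mult power_abs)
    also have "\<dots> \<le> (2*\<bar>x\<bar>*1) * q^k"
      by (intro mult_mono power_mono xp[OF that] mult_left_mono tt) (use q1 tt in auto)
    finally show ?thesis by simp
  qed
  have summ: "summable (\<lambda>k. 2*\<bar>x\<bar> * q^k)" using q1 by (intro summable_mult summable_geometric) auto
  have unif: "uniform_limit {0..1} (\<lambda>n t. \<Sum>i<n. f i t) (\<lambda>t. suminf (\<lambda>i. f i t)) sequentially"
    by (rule Weierstrass_m_test[OF bound summ])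
  have sumeq: "suminf (\<lambda>i. f i t) = h t" if "t \<in> {0..1}" for t
  proof -
    have "\<bar>x*(t*(1-t)^2)\<bar> < 1" using xp[OF that] q1 by linarith
    then have "(\<lambda>k. (x*(t*(1-t)^2))^k) sums (1/(1 - x*(t*(1-t)^2)))"
      by (intro geometric_sums) simp
    then have "(\<lambda>k. f k t) sums ((2*x*t*(1-t)) * (1/(1 - x*(t*(1-t)^2))))"
      unfolding fform by (rule sums_mult)
    moreover have "(2*x*t*(1-t)) * (1/(1 - x*(t*(1-t)^2))) = h t"
    proof -
      have c0: "a*(1-a)^2 \<noteq> 0" using a0 a1 by simp
      have key: "a*(1-a)^2 - t*(1-t)^2 = -((t-a)*(t^2 + (a-2)*t + (1-a)^2))" by algebra
      have "1 - x*(t*(1-t)^2) = (a*(1-a)^2 - t*(1-t)^2)/(a*(1-a)^2)"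
        unfolding hx using c0 by (simp add: field_simps)
      then have e: "1 - x*(t*(1-t)^2) = -((t-a)*(t^2 + (a-2)*t + (1-a)^2))/(a*(1-a)^2)"
        by (simp only: key)
      have n1: "t - a \<noteq> 0" using ta[OF that] by simp
      have n2: "t^2 + (a-2)*t + (1-a)^2 \<noteq> 0" using Qp[of t] by simp
      have gen: "\<And>c R::real. c \<noteq> 0 \<Longrightarrow> R \<noteq> 0 \<Longrightarrow>
          (2*(1/c)*t*(1-t))*(1/(-R/c)) = 2*t*(t-1)/R"
        by (simp add: field_simps)
      show ?thesis unfolding e unfolding h_def hx by (rule gen) (use c0 n1 n2 in simp_all)
    qed
    ultimately show ?thesis by (simp add: sums_iff)
  qed
  have cont: "continuous_on {0..1} (\<lambda>t. \<Sum>i<n. f i t)" for n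
    unfolding f_def by (intro continuous_intros)
  obtain I J where I: "\<And>n. ((\<lambda>t. \<Sum>i<n. f i t) has_integral I n) {0..1}"
     and J: "((\<lambda>t. suminf (\<lambda>i. f i t)) has_integral J) {0..1}" and IJ: "I \<longlonglongrightarrow> J"
    by (rule uniform_limit_integral[OF unif cont]) auto
  define c where "c k = x^(k+1) / (real (k+1) * real ((3*(k+1)) choose (k+1)))" for k
  have In: "I n = (\<Sum>i<n. c i)" for n
  proof -
    have "((\<lambda>t. \<Sum>i<n. f i t) has_integral (\<Sum>i<n. c i)) {0..1}"
      unfolding f_def c_def by (intro has_integral_sum term_int) auto
    then show ?thesis by (rule has_integral_unique[OF I[of n]])
  qed
  have J': "J = \<Phi> 1 - \<Phi> 0"
  proof -
    have "((\<lambda>t. suminf (\<lambda>i. f i t)) has_integral (\<Phi> 1 - \<Phi> 0)) {0..1}"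
      by (rule has_integral_spike_finite[where S="{}", OF _ _ ftc]) (auto simp: sumeq)
    then show ?thesis by (rule has_integral_unique[OF J])
  qed
  have Ieq: "I = (\<lambda>n. \<Sum>i<n. c i)" by (rule ext) (rule In)
  have "c sums (\<Phi> 1 - \<Phi> 0)" unfolding sums_def using IJ J' Ieq by simp
  moreover have "\<Phi> 1 - \<Phi> 0 = (ln((a-1)/a) + 2*a/w*arctan(w/(a*(2*a-3))))/(3*a-1)"
  proof -
    define \<rho> where "\<rho> = (a-1)/a"
    have r0: "\<rho> > 0" using aa unfolding \<rho>_def by (auto simp: zero_less_divide_iff)
    have a2: "a^2 > 0" using a0 by simp
    have lr: "ln (\<rho>^2 * a^2) = 2 * ln \<rho> + ln (a^2)"
      using r0 a2 by (simp add: ln_mult ln_realpow)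
    have lr1: "ln (\<rho> * a^2) = ln \<rho> + ln (a^2)"
      using r0 a2 by (simp add: ln_mult)
    have s1: "(1-a)^2 = \<rho>^2 * a^2" unfolding \<rho>_def using a0 by (simp add: field_simps power2_eq_square)
    have s2: "1^2 + (a-2)*1 + (1-a)^2 = \<rho> * a^2" unfolding \<rho>_def using a0 by (simp add: field_simps power2_eq_square)
    have l1: "ln((1-a)^2) = 2 * ln \<rho> + ln (a^2)" using s1 lr by simp
    have l2: "ln(1^2 + (a-2)*1 + (1-a)^2) = ln \<rho> + ln (a^2)" using s2 lr1 by simp
    have at1: "arctan(1*w/(2*(a-1)^2 + 1*(a-2))) = arctan(w/(a*(2*a-3)))"
    proof -
      have "2*(a-1)^2 + 1*(a-2) = a*(2*a-3)" by algebra
      then show ?thesis by simp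
    qed
    have l3: "ln((0-a)^2) = ln (a^2)" by simp
    have l4: "ln(0^2 + (a-2)*0 + (1-a)^2) = 2 * ln \<rho> + ln (a^2)" using l1 by simp
    have at0: "arctan(0*w/(2*(a-1)^2 + 0*(a-2))) = 0" by simp
    have a3': "3*a - 1 \<noteq> 0" using a3 by simp
    have gen: "\<And>L M A. (a*(2*L+M) + (2*a-1)*(L+M) + 2*a/w*A)/(3*a-1)
       - (a*M + (2*a-1)*(2*L+M) + 2*a/w*0)/(3*a-1) = (L + 2*a/w*A)/(3*a-1)"
    proof -
      fix L M A :: real
      have "(a*(2*L+M) + (2*a-1)*(L+M) + 2*a/w*A) - (a*M + (2*a-1)*(2*L+M) + 2*a/w*0)
          = L + 2*a/w*A" by (simp add: algebra_simps)
      then show "(a*(2*L+M) + (2*a-1)*(L+M) + 2*a/w*A)/(3*a-1)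
       - (a*M + (2*a-1)*(2*L+M) + 2*a/w*0)/(3*a-1) = (L + 2*a/w*A)/(3*a-1)"
        by (simp add: diff_divide_distrib[symmetric])
    qed
    show ?thesis
      unfolding \<Phi>_def l1 l2 at1 l3 l4 at0 \<rho>_def[symmetric] by (rule gen)
  qed
  ultimately show ?thesis unfolding c_def by simp
qed

lemma lucas_closed: "real (lucas n) = golden^n + ((1 - sqrt 5)/2)^n"
proof (induction n rule: lucas.induct)
  case 1
  then show ?case by simp
next
  case 2
  then show ?case by (simp add: golden_def field_simps)
next
  case (3 n)
  define \<phi> where "\<phi> = golden"
  define \<psi> :: real where "\<psi> = (1 - sqrt 5)/2"
  have p1: "\<phi>^2 = \<phi> + 1" unfolding \<phi>_def golden_def by (simp add: field_simps power2_eq_square)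
  have p2: "\<psi>^2 = \<psi> + 1" unfolding \<psi>_def by (simp add: field_simps power2_eq_square)
  have "real (lucas (Suc (Suc n))) = real (lucas (Suc n)) + real (lucas n)" by simp
  also have "\<dots> = \<phi>^n * (\<phi> + 1) + \<psi>^n * (\<psi> + 1)"
    using 3 unfolding \<phi>_def[symmetric] \<psi>_def[symmetric] by (simp add: field_simps)
  also have "\<dots> = \<phi>^Suc (Suc n) + \<psi>^Suc (Suc n)"
    unfolding p1[symmetric] p2[symmetric] by (simp add: power2_eq_square)
  finally show ?case unfolding \<phi>_def \<psi>_def .
qed

lemma arctan_triple:
  fixes y :: real
  assumes "0 \<le> y" "3*y^2 < 1"
  shows "3 * arctan y = arctan ((3*y - y^3)/(1 - 3*y^2))"
proof -
  have y1: "y < 1"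
  proof (rule ccontr)
    assume "\<not> y < 1"
    then have "1 \<le> y^2" by (simp add: one_le_power)
    with assms show False by simp
  qed
  have y2: "y^2 < 1" using assms by simp
  have d1: "1 - y^2 > 0" using y2 by simp
  define z where "z = 2*y/(1-y^2)"
  have A: "arctan y + arctan y = arctan z"
    unfolding z_def using arctan_add[of y y] assms y1 by (simp add: power2_eq_square)
  have zy: "\<bar>z * y\<bar> < 1"
  proof -
    have "z*y = 2*y^2/(1-y^2)" unfolding z_def by (simp add: power2_eq_square)
    moreover have "2*y^2/(1-y^2) < 1" using d1 assms by (simp add: field_simps)
    moreover have "2*y^2/(1-y^2) \<ge> 0" using d1 by simp
    ultimately show ?thesis by (simp only: abs_of_nonneg)
  qed
  have B: "arctan z + arctan y = arctan ((z+y)/(1-z*y))"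
    by (rule arctan_add_small[OF zy])
  have C: "(z+y)/(1-z*y) = (3*y - y^3)/(1 - 3*y^2)"
  proof -
    have d2: "1 - 3*y^2 \<noteq> 0" using assms by simp
    have d3: "1 - y^2 \<noteq> 0" using d1 by simp
    have n: "z + y = (3*y - y^3)/(1-y^2)" unfolding z_def using d3
      by (simp add: field_simps power2_eq_square power3_eq_cube)
    have m: "1 - z*y = (1 - 3*y^2)/(1-y^2)" unfolding z_def using d3
      by (simp add: field_simps power2_eq_square power3_eq_cube)
    show ?thesis unfolding n m using d3 by simp
  qed
  have "3 * arctan y = arctan y + arctan y + arctan y" by simp
  also have "\<dots> = arctan ((3*y - y^3)/(1 - 3*y^2))" unfolding A B C ..
  finally show ?thesis .
qed

lemma fib_luc_rel:
  fixes r :: nat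
  shows "real (lucas r)^2 = 5*real (fib r)^2 + 4*(-1)^r"
    and "real (fib (3*r)) = real (fib r)*(5*real (fib r)^2 + 3*(-1)^r)"
    and "real (lucas (3*r)) = real (lucas r)*(real (lucas r)^2 - 3*(-1)^r)"
    and "golden^r = (real (lucas r) + sqrt 5 * real (fib r))/2"
proof -
  define s where "s = sqrt (5::real)"
  define \<psi> :: real where "\<psi> = (1 - s)/2"
  define \<beta> where "\<beta> = golden^r"
  define \<gamma> where "\<gamma> = \<psi>^r"
  define e :: real where "e = (-1)^r"
  have s2: "s^2 = 5" unfolding s_def by simp
  have s0: "s \<noteq> 0" unfolding s_def by simp
  have gp: "golden * \<psi> = -1" unfolding golden_def \<psi>_def s_def
    by (simp add: field_simps power2_eq_square)
  have bg: "\<beta> * \<gamma> = e" unfolding \<beta>_def \<gamma>_def e_def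
    by (simp add: power_mult_distrib[symmetric] gp)
  have hF: "s * real (fib r) = \<beta> - \<gamma>"
    using fib_closed_form[of r] s0 unfolding \<beta>_def \<gamma>_def \<psi>_def s_def golden_def by simp
  have hF3: "s * real (fib (3*r)) = \<beta>^3 - \<gamma>^3"
    using fib_closed_form[of "3*r"] s0 unfolding \<beta>_def \<gamma>_def \<psi>_def s_def golden_def
    by (simp add: power_mult[symmetric] mult.commute)
  have hL: "real (lucas r) = \<beta> + \<gamma>"
    using lucas_closed[of r] unfolding \<beta>_def \<gamma>_def \<psi>_def s_def by simp
  have hL3: "real (lucas (3*r)) = \<beta>^3 + \<gamma>^3"
    using lucas_closed[of "3*r"] unfolding \<beta>_def \<gamma>_def \<psi>_def s_def
    by (simp add: power_mult[symmetric] mult.commute)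
  show "real (lucas r)^2 = 5*real (fib r)^2 + 4*(-1)^r"
  proof -
    have "5*real (fib r)^2 = (s * real (fib r))^2" using s2 by (simp add: power_mult_distrib)
    then show ?thesis unfolding hL e_def[symmetric] using hF bg by algebra
  qed
  show "real (fib (3*r)) = real (fib r)*(5*real (fib r)^2 + 3*(-1)^r)"
  proof -
    have "s * real (fib (3*r)) = s * (real (fib r)*(5*real (fib r)^2 + 3*e))"
      using hF hF3 bg s2 by algebra
    then show ?thesis using s0 unfolding e_def by simp
  qed
  show "real (lucas (3*r)) = real (lucas r)*(real (lucas r)^2 - 3*(-1)^r)"
    unfolding hL hL3 e_def[symmetric] bg[symmetric]
    by (simp add: power2_eq_square power3_eq_cube algebra_simps)
  show "golden^r = (real (lucas r) + sqrt 5 * real (fib r))/2"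
    unfolding s_def[symmetric] hF hL \<beta>_def[symmetric] by simp
qed

lemma tri_form:
  fixes q P :: real
  assumes "q^2 = 3" "P > 3"
  shows "(3*(q/P) - (q/P)^3)/(1 - 3*(q/P)^2) = 3*q*(P^2-1)/(P*(P^2-9))"
proof -
  have P0: "P \<noteq> 0" using assms by simp
  have P9: "P^2 - 9 \<noteq> 0"
  proof -
    have "P^2 > 3^2" using assms(2) by (intro power_strict_mono) auto
    then show ?thesis by simp
  qed
  have e1: "(q/P)^3 = 3*q/P^3" using assms(1) by (simp add: power_divide power3_eq_cube power2_eq_square)
  have e2: "(q/P)^2 = 3/P^2" using assms(1) by (simp add: power_divide)
  have e3: "3*(q/P) - 3*q/P^3 = 3*q*(P^2-1)/P^3" using P0 by (simp add: field_simps power2_eq_square power3_eq_cube)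
  have e4: "1 - 3*(3/P^2) = (P^2-9)/P^2" using P0 by (simp add: field_simps)
  show ?thesis unfolding e1 e2 e3 e4 using P0 P9 by (simp add: field_simps power2_eq_square power3_eq_cube)
qed

lemma basics:
  fixes r :: nat
  assumes "r \<ge> 1"
  shows "real (fib r) \<ge> 1" "real (lucas r) \<ge> 1" "golden^r \<ge> golden" "golden > 8/5"
    "(-1::real)^r = 1 \<or> (-1::real)^r = -1"
proof -
  show F1: "real (fib r) \<ge> 1" using fib_neq_0_nat[of r] assms by simp
  have e: "(-1::real)^r = 1 \<or> (-1::real)^r = -1" by (cases "even r") auto
  then show "(-1::real)^r = 1 \<or> (-1::real)^r = -1" .
  have "real (lucas r)^2 \<ge> 1"
    using fib_luc_rel(1)[of r] F1 e by (auto simp: one_le_power)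
  then have "lucas r \<noteq> 0" by (cases "lucas r = 0") auto
  then show "real (lucas r) \<ge> 1" by simp
  have s: "sqrt 5 > (11/5::real)" by (rule real_less_rsqrt) (simp add: power2_eq_square)
  then show g: "golden > 8/5" unfolding golden_def by simp
  show "golden^r \<ge> golden"
    using power_increasing[of 1 r golden] assms g by simp
qed

lemma part1:
  fixes r :: nat assumes r: "r \<ge> 1"
  shows "(\<lambda>k. ((-1) ^ ((r - 1) * (k + 1)) * (27 / 5) ^ (k + 1)) /
             (real (k + 1) * real ((3 * (k + 1)) choose (k + 1)) * real (fib (3 * r)) ^ (2 * (k + 1))))
           sums (2 * sqrt 15 * real (fib r) / real (lucas (3 * r))
                   * arctan (sqrt 3 / (golden ^ r * (golden ^ r + real (lucas r))))
                 - (-1) ^ r * real (lucas r) / real (lucas (3 * r))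
                   * ln (real (fib (3 * r)) / (5 * real (fib r) ^ 3)))"
proof -
  define F where "F = real (fib r)"
  define L where "L = real (lucas r)"
  define F3 where "F3 = real (fib (3*r))"
  define L3 where "L3 = real (lucas (3*r))"
  define e :: real where "e = (-1)^r"
  define q3 where "q3 = sqrt (3::real)"
  define q5 where "q5 = sqrt (5::real)"
  define \<beta> where "\<beta> = golden^r"
  have F1: "F \<ge> 1" and L1: "L \<ge> 1" and bg: "\<beta> \<ge> golden" and g: "golden > 8/5"
    and ee: "e = 1 \<or> e = -1"
    using basics[OF r] unfolding F_def L_def \<beta>_def e_def by auto
  have rl: "L^2 = 5*F^2 + 4*e" "F3 = F*(5*F^2+3*e)" "L3 = L*(L^2-3*e)" "\<beta> = (L + q5*F)/2"
    using fib_luc_rel[of r] unfolding F_def L_def F3_def L3_def e_def q5_def \<beta>_def by auto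
  have e2: "e^2 = 1" using ee by auto
  have q32: "q3^2 = 3" and q52: "q5^2 = 5" and q3p: "q3 > 0" and q5p: "q5 > 0"
    unfolding q3_def q5_def by auto
  have s15: "sqrt 15 = q3*q5" unfolding q3_def q5_def by (simp add: real_sqrt_mult[symmetric])
  have em: "(-1::real)^(r-1) = -e" using r unfolding e_def by (cases r) auto
  define a where "a = -e*5*F^2/3"
  define w where "w = q5*F*L*q3/3"
  define x where "x = (-1)^(r-1)*(27/5)/F3^2"
  have F3p: "F3 \<ge> 2"
  proof -
    have "5*F^2+3*e \<ge> 2" using F1 ee by (auto simp: one_le_power)
    then have "F*(5*F^2+3*e) \<ge> 1*2" using F1 by (intro mult_mono) auto
    then show ?thesis using rl(2) by simp
  qed
  have ha: "a*(2*a-3) > 0"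
    using ee
  proof
    assume e1: "e = 1"
    have "F^2 \<ge> 1" using F1 by (simp add: one_le_power)
    then have "a < 0" "2*a-3 < 0" unfolding a_def e1 by auto
    then show ?thesis by (simp add: mult_neg_neg)
  next
    assume e1: "e = -1"
    have "F^2 \<ge> 1" using F1 by (simp add: one_le_power)
    then have "a > 0" "2*a-3 > 0" unfolding a_def e1 by auto
    then show ?thesis by simp
  qed
  have hw: "w > 0" unfolding w_def using q5p q3p F1 L1 by simp
  have h3a: "3*a = -5*e*F^2" unfolding a_def by simp
  have h3w: "3*w = q5*F*L*q3" unfolding w_def by simp
  have w2: "w^2 = a*(3*a-4)"
    using h3a h3w q32 q52 e2 rl(1) by algebra
  have F3n: "F3 \<noteq> 0" using F3p by simp
  have x5: "5*F3^2*x = -27*e" unfolding x_def em using F3n by (simp add: field_simps)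
  have a0: "a \<noteq> 0" using ha by auto
  have a1: "a \<noteq> 1" using ha by auto
  have cnz: "a*(1-a)^2 \<noteq> 0" using a0 a1 by simp
  have "x*(a*(1-a)^2) = 1" using x5 h3a rl(2) e2 by algebra
  then have hx: "x = 1/(a*(1-a)^2)" using cnz by (simp add: eq_divide_eq)
  have hc: "4*\<bar>x\<bar> < 27"
  proof -
    have ax: "5*F3^2*\<bar>x\<bar> = 27"
    proof -
      have "\<bar>5*F3^2*x\<bar> = 27" unfolding x5 using ee by auto
      then show ?thesis by (simp add: abs_mult)
    qed
    have "F3^2 \<ge> 2^2" using F3p by (intro power_mono) auto
    then have "5*F3^2 \<ge> 20" by simp
    then have "20*\<bar>x\<bar> \<le> 5*F3^2*\<bar>x\<bar>" by (intro mult_right_mono) auto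
    then show ?thesis unfolding ax by simp
  qed
  have S: "(\<lambda>k. x^(k+1) / (real (k+1) * real ((3*(k+1)) choose (k+1)))) sums
          ((ln((a-1)/a) + 2*a/w*arctan(w/(a*(2*a-3))))/(3*a-1))"
    by (rule gen_series[OF ha hw w2 hx hc])
  have terms: "(\<lambda>k. ((-1) ^ ((r - 1) * (k + 1)) * (27 / 5) ^ (k + 1)) /
             (real (k + 1) * real ((3 * (k + 1)) choose (k + 1)) * real (fib (3 * r)) ^ (2 * (k + 1))))
     = (\<lambda>k. x^(k+1) / (real (k+1) * real ((3*(k+1)) choose (k+1))))"
  proof (rule ext)
    fix k :: nat
    have "x^(k+1) = (-1)^((r-1)*(k+1)) * (27/5)^(k+1) / F3^(2*(k+1))"
      unfolding x_def power_divide power_mult_distrib power_mult[symmetric] by (rule refl)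
    then show "((-1) ^ ((r - 1) * (k + 1)) * (27 / 5) ^ (k + 1)) /
             (real (k + 1) * real ((3 * (k + 1)) choose (k + 1)) * real (fib (3 * r)) ^ (2 * (k + 1)))
       = x^(k+1) / (real (k+1) * real ((3*(k+1)) choose (k+1)))"
      unfolding F3_def by (simp add: divide_divide_eq_left ac_simps)
  qed
  have L3e: "L3 = L*(5*F^2+e)" using rl(1) rl(3) by algebra
  have Fe: "5*F^2+e > 0"
  proof -
    have "F^2 \<ge> 1" using F1 by (simp add: one_le_power)
    then show ?thesis using ee by auto
  qed
  have L3n: "L3 \<noteq> 0" using L3e Fe L1 by simp
  have a3n: "3*a-1 \<noteq> 0"
  proof
    assume "3*a-1 = 0"
    then have "3*a = 1" by simp
    moreover have "F^2 \<ge> 1" using F1 by (simp add: one_le_power)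
    ultimately show False using h3a ee by auto
  qed
  have rho: "(a-1)/a = F3/(5*F^3)"
  proof -
    have "(a-1)*(5*F^3) = F3*a" using h3a rl(2) e2 by algebra
    then show ?thesis using a0 F1 by (simp add: frac_eq_eq)
  qed
  have c1: "1/(3*a-1) = -(e*L/L3)"
  proof -
    have "1*L3 = (-(e*L))*(3*a-1)" using h3a rl(1) rl(3) e2 by algebra
    then have "1/(3*a-1) = (-(e*L))/L3" using a3n L3n by (simp add: frac_eq_eq)
    then show ?thesis by simp
  qed
  have c2: "2*a/w*3/(3*a-1) = 2*(q3*q5)*F/L3"
  proof -
    have "(6*a)*L3 = (2*(q3*q5)*F)*(w*(3*a-1))" using h3a h3w L3e q32 q52 e2 by algebra
    then have "(6*a)/(w*(3*a-1)) = 2*(q3*q5)*F/L3" using a3n L3n hw by (simp add: frac_eq_eq)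
    then show ?thesis by (simp add: field_simps)
  qed
  define P where "P = \<beta>*(\<beta>+L)"
  have P3: "P > 3"
  proof -
    have "\<beta> > 8/5" using bg g by simp
    moreover have "\<beta> + L > 13/5" using bg g L1 by simp
    ultimately have "\<beta>*(\<beta>+L) > (8/5)*(13/5)" by (intro mult_strict_mono) auto
    then show ?thesis unfolding P_def by simp
  qed
  have P9: "P*(P^2-9) \<noteq> 0"
  proof -
    have "P^2 > 3^2" using P3 by (intro power_strict_mono) auto
    then show ?thesis using P3 by simp
  qed
  have at: "arctan(w/(a*(2*a-3))) = 3*arctan(q3/P)"
  proof -
    have y0: "q3/P \<ge> 0" using q3p P3 by simp
    have y1: "3*(q3/P)^2 < 1"
    proof -
      have "P^2 > 3^2" using P3 by (intro power_strict_mono) auto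
      then show ?thesis using q32 P3 by (simp add: power_divide)
    qed
    have "w*(P*(P^2-9)) = (3*q3*(P^2-1))*(a*(2*a-3))"
      unfolding P_def using h3a h3w rl(4) rl(1) q52 e2 by algebra
    moreover have ha0: "a*(2*a-3) \<noteq> 0" using ha by (metis less_irrefl)
    ultimately have "w/(a*(2*a-3)) = 3*q3*(P^2-1)/(P*(P^2-9))"
      by (simp only: frac_eq_eq[OF ha0 P9])
    also have "\<dots> = (3*(q3/P) - (q3/P)^3)/(1 - 3*(q3/P)^2)" by (rule tri_form[OF q32 P3, symmetric])
    finally show ?thesis using arctan_triple[OF y0 y1] by simp
  qed
  have val: "(ln((a-1)/a) + 2*a/w*arctan(w/(a*(2*a-3))))/(3*a-1) =
     2*(q3*q5)*F/L3 * arctan(q3/P) - e*L/L3 * ln(F3/(5*F^3))"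
  proof -
    have gen: "\<And>A B k m::real. m \<noteq> 0 \<Longrightarrow> (A + k*(3*B))/m = A*(1/m) + B*(k*3/m)"
      by (simp add: field_simps)
    show ?thesis unfolding rho at gen[OF a3n] unfolding c1 c2
      using L3n by (simp add: field_simps)
  qed
  have val': "(ln((a-1)/a) + 2*a/w*arctan(w/(a*(2*a-3))))/(3*a-1) =
     2 * sqrt 15 * real (fib r) / real (lucas (3 * r))
                   * arctan (sqrt 3 / (golden ^ r * (golden ^ r + real (lucas r))))
                 - (-1) ^ r * real (lucas r) / real (lucas (3 * r))
                   * ln (real (fib (3 * r)) / (5 * real (fib r) ^ 3))"
    unfolding val s15 P_def F_def L_def F3_def L3_def e_def q3_def \<beta>_def by simp
  show ?thesis using S unfolding terms val' .
qed


lemma part2: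
  fixes r :: nat assumes r: "r \<ge> 1"
  shows "(\<lambda>k. ((-1) ^ (r * (k + 1)) * 27 ^ (k + 1)) /
             (real (k + 1) * real ((3 * (k + 1)) choose (k + 1)) * real (lucas (3 * r)) ^ (2 * (k + 1))))
           sums (2 * sqrt 15 / 5 * real (lucas r) / real (fib (3 * r))
                   * arctan (sqrt 3 / (golden ^ r * (golden ^ r + sqrt 5 * real (fib r))))
                 + (-1) ^ r * real (fib r) / real (fib (3 * r))
                   * ln (real (lucas (3 * r)) / real (lucas r) ^ 3))"
proof -
  define F where "F = real (fib r)"
  define L where "L = real (lucas r)"
  define F3 where "F3 = real (fib (3*r))"
  define L3 where "L3 = real (lucas (3*r))"
  define e :: real where "e = (-1)^r"
  define q3 where "q3 = sqrt (3::real)"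
  define q5 where "q5 = sqrt (5::real)"
  define \<beta> where "\<beta> = golden^r"
  have F1: "F \<ge> 1" and L1: "L \<ge> 1" and bg: "\<beta> \<ge> golden" and g: "golden > 8/5"
    and ee: "e = 1 \<or> e = -1"
    using basics[OF r] unfolding F_def L_def \<beta>_def e_def by auto
  have rl: "L^2 = 5*F^2 + 4*e" "F3 = F*(5*F^2+3*e)" "L3 = L*(L^2-3*e)" "\<beta> = (L + q5*F)/2"
    using fib_luc_rel[of r] unfolding F_def L_def F3_def L3_def e_def q5_def \<beta>_def by auto
  have e2: "e^2 = 1" using ee by auto
  have q32: "q3^2 = 3" and q52: "q5^2 = 5" and q3p: "q3 > 0" and q5p: "q5 > 0"
    unfolding q3_def q5_def by auto
  have s15: "sqrt 15 = q3*q5" unfolding q3_def q5_def by (simp add: real_sqrt_mult[symmetric])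
  have em: "(-1::real)^(r-1) = -e" using r unfolding e_def by (cases r) auto
  define a where "a = e*L^2/3"
  define w where "w = q5*F*L*q3/3"
  define x where "x = (-1)^r*27/L3^2"
  have Fsq: "F^2 \<ge> 1" using F1 by (simp add: one_le_power)
  have F3p: "F3 \<ge> 2"
  proof -
    have "5*F^2+3*e \<ge> 2" using F1 ee by (auto simp: one_le_power)
    then have "F*(5*F^2+3*e) \<ge> 1*2" using F1 by (intro mult_mono) auto
    then show ?thesis using rl(2) by simp
  qed
  have L3e: "L3 = L*(5*F^2+e)" using rl(1) rl(3) by algebra
  have L3p: "L3 \<ge> 4"
  proof -
    have "5*F^2+e \<ge> 4" using Fsq ee by auto
    then have "L*(5*F^2+e) \<ge> 1*4" using L1 by (intro mult_mono) auto
    then show ?thesis using L3e by simp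
  qed
  have ha: "a*(2*a-3) > 0"
    using ee
  proof
    assume e1: "e = 1"
    have "L^2 \<ge> 9" using rl(1) Fsq e1 by simp
    then have "a > 0" "2*a-3 > 0" unfolding a_def e1 by auto
    then show ?thesis by simp
  next
    assume e1: "e = -1"
    have "L^2 \<ge> 1" using L1 by (simp add: one_le_power)
    then have "a < 0" "2*a-3 < 0" unfolding a_def e1 by auto
    then show ?thesis by (simp add: mult_neg_neg)
  qed
  have hw: "w > 0" unfolding w_def using q5p q3p F1 L1 by simp
  have h3a: "3*a = e*L^2" unfolding a_def by simp
  have h3w: "3*w = q5*F*L*q3" unfolding w_def by simp
  have w2: "w^2 = a*(3*a-4)"
    using h3a h3w q32 q52 e2 rl(1) by algebra
  have L3n: "L3 \<noteq> 0" using L3p by simp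
  have F3n: "F3 \<noteq> 0" using F3p by simp
  have x5: "L3^2*x = 27*e" unfolding x_def e_def using L3n by (simp add: field_simps)
  have a0: "a \<noteq> 0" using ha by auto
  have a1: "a \<noteq> 1" using ha by auto
  have cnz: "a*(1-a)^2 \<noteq> 0" using a0 a1 by simp
  have "x*(a*(1-a)^2) = 1" using x5 h3a rl(3) e2 by algebra
  then have hx: "x = 1/(a*(1-a)^2)" using cnz by (simp add: eq_divide_eq)
  have hc: "4*\<bar>x\<bar> < 27"
  proof -
    have ax: "L3^2*\<bar>x\<bar> = 27"
    proof -
      have "\<bar>L3^2*x\<bar> = 27" unfolding x5 using ee by auto
      then show ?thesis by (simp add: abs_mult)
    qed
    have "L3^2 \<ge> 4^2" using L3p by (intro power_mono) auto
    then have "L3^2 \<ge> 16" by simp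
    then have "16*\<bar>x\<bar> \<le> L3^2*\<bar>x\<bar>" by (intro mult_right_mono) auto
    then show ?thesis unfolding ax by simp
  qed
  have S: "(\<lambda>k. x^(k+1) / (real (k+1) * real ((3*(k+1)) choose (k+1)))) sums
          ((ln((a-1)/a) + 2*a/w*arctan(w/(a*(2*a-3))))/(3*a-1))"
    by (rule gen_series[OF ha hw w2 hx hc])
  have terms: "(\<lambda>k. ((-1) ^ (r * (k + 1)) * 27 ^ (k + 1)) /
             (real (k + 1) * real ((3 * (k + 1)) choose (k + 1)) * real (lucas (3 * r)) ^ (2 * (k + 1))))
     = (\<lambda>k. x^(k+1) / (real (k+1) * real ((3*(k+1)) choose (k+1))))"
  proof (rule ext)
    fix k :: nat
    have "x^(k+1) = (-1)^(r*(k+1)) * 27^(k+1) / L3^(2*(k+1))"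
      unfolding x_def power_divide power_mult_distrib power_mult[symmetric] by (rule refl)
    then show "((-1) ^ (r * (k + 1)) * 27 ^ (k + 1)) /
             (real (k + 1) * real ((3 * (k + 1)) choose (k + 1)) * real (lucas (3 * r)) ^ (2 * (k + 1)))
       = x^(k+1) / (real (k+1) * real ((3*(k+1)) choose (k+1)))"
      unfolding L3_def by (simp add: divide_divide_eq_left ac_simps)
  qed
  have a3n: "3*a-1 \<noteq> 0"
  proof
    assume "3*a-1 = 0"
    then have "e*L^2 = 1" using h3a by simp
    moreover have "L^2 \<ge> 9 \<or> e = -1" using rl(1) Fsq ee by auto
    moreover have "L^2 \<ge> 1" using L1 by (simp add: one_le_power)
    ultimately show False using ee by auto
  qed
  have rho: "(a-1)/a = L3/(L^3)"
  proof -
    have "(a-1)*(L^3) = L3*a" using h3a rl(3) e2 by algebra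
    moreover have "L^3 \<noteq> 0" using L1 by simp
    ultimately show ?thesis using a0 by (simp add: frac_eq_eq)
  qed
  have c1: "1/(3*a-1) = e*F/F3"
  proof -
    have "1*F3 = (e*F)*(3*a-1)" using h3a rl(1) rl(2) e2 by algebra
    then show ?thesis using a3n F3n by (simp add: frac_eq_eq)
  qed
  have c2: "2*a/w*3/(3*a-1) = 2*(q3*q5)/5*L/F3"
  proof -
    have "(6*a)*F3 = (2*(q3*q5)/5*L)*(w*(3*a-1))" using h3a h3w rl(1) rl(2) q32 q52 e2 by algebra
    then have "(6*a)/(w*(3*a-1)) = 2*(q3*q5)/5*L/F3" using a3n F3n hw by (simp add: frac_eq_eq)
    then show ?thesis by (simp add: field_simps)
  qed
  define P where "P = \<beta>*(\<beta>+q5*F)"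
  have P3: "P > 3"
  proof -
    have "\<beta> > 8/5" using bg g by simp
    moreover have "q5*F \<ge> q5" using F1 q5p by simp
    moreover have "q5 > 11/5" using g unfolding golden_def q5_def by simp
    ultimately have "\<beta> + q5*F > 19/5" by linarith
    moreover have "\<beta> > 8/5" using bg g by simp
    ultimately have "\<beta>*(\<beta>+q5*F) > (8/5)*(19/5)" by (intro mult_strict_mono) auto
    then show ?thesis unfolding P_def by simp
  qed
  have P9: "P*(P^2-9) \<noteq> 0"
  proof -
    have "P^2 > 3^2" using P3 by (intro power_strict_mono) auto
    then show ?thesis using P3 by simp
  qed
  have at: "arctan(w/(a*(2*a-3))) = 3*arctan(q3/P)"
  proof -
    have y0: "q3/P \<ge> 0" using q3p P3 by simp
    have y1: "3*(q3/P)^2 < 1"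
    proof -
      have "P^2 > 3^2" using P3 by (intro power_strict_mono) auto
      then show ?thesis using q32 P3 by (simp add: power_divide)
    qed
    have "w*(P*(P^2-9)) = (3*q3*(P^2-1))*(a*(2*a-3))"
      unfolding P_def using h3a h3w rl(4) rl(1) q52 e2 by algebra
    moreover have ha0: "a*(2*a-3) \<noteq> 0" using ha by (metis less_irrefl)
    ultimately have "w/(a*(2*a-3)) = 3*q3*(P^2-1)/(P*(P^2-9))"
      by (simp only: frac_eq_eq[OF ha0 P9])
    also have "\<dots> = (3*(q3/P) - (q3/P)^3)/(1 - 3*(q3/P)^2)" by (rule tri_form[OF q32 P3, symmetric])
    finally show ?thesis using arctan_triple[OF y0 y1] by simp
  qed
  have val: "(ln((a-1)/a) + 2*a/w*arctan(w/(a*(2*a-3))))/(3*a-1) =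
     2*(q3*q5)/5*L/F3 * arctan(q3/P) + e*F/F3 * ln(L3/L^3)"
  proof -
    have gen: "\<And>A B k m::real. m \<noteq> 0 \<Longrightarrow> (A + k*(3*B))/m = A*(1/m) + B*(k*3/m)"
      by (simp add: field_simps)
    show ?thesis unfolding rho at gen[OF a3n] unfolding c1 c2
      using F3n by (simp add: field_simps)
  qed
  have val': "(ln((a-1)/a) + 2*a/w*arctan(w/(a*(2*a-3))))/(3*a-1) =
     2 * sqrt 15 / 5 * real (lucas r) / real (fib (3 * r))
                   * arctan (sqrt 3 / (golden ^ r * (golden ^ r + sqrt 5 * real (fib r))))
                 + (-1) ^ r * real (fib r) / real (fib (3 * r))
                   * ln (real (lucas (3 * r)) / real (lucas r) ^ 3)"
    unfolding val s15 P_def F_def L_def F3_def L3_def e_def q3_def q5_def \<beta>_def by simp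
  show ?thesis using S unfolding terms val' .
qed

theorem corollary5:
  fixes r :: nat
  assumes "r \<ge> 1"
  shows "(\<lambda>k. ((-1) ^ ((r - 1) * (k + 1)) * (27 / 5) ^ (k + 1)) /
             (real (k + 1) * real ((3 * (k + 1)) choose (k + 1)) * real (fib (3 * r)) ^ (2 * (k + 1))))
           sums (2 * sqrt 15 * real (fib r) / real (lucas (3 * r))
                   * arctan (sqrt 3 / (golden ^ r * (golden ^ r + real (lucas r))))
                 - (-1) ^ r * real (lucas r) / real (lucas (3 * r))
                   * ln (real (fib (3 * r)) / (5 * real (fib r) ^ 3)))
         \<and> (\<lambda>k. ((-1) ^ (r * (k + 1)) * 27 ^ (k + 1)) /
             (real (k + 1) * real ((3 * (k + 1)) choose (k + 1)) * real (lucas (3 * r)) ^ (2 * (k + 1))))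
           sums (2 * sqrt 15 / 5 * real (lucas r) / real (fib (3 * r))
                   * arctan (sqrt 3 / (golden ^ r * (golden ^ r + sqrt 5 * real (fib r))))
                 + (-1) ^ r * real (fib r) / real (fib (3 * r))
                   * ln (real (lucas (3 * r)) / real (lucas r) ^ 3))"
  using part1[OF assms] part2[OF assms] by (rule conjI)

end
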